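(* For $\tau\in\mathbb{R}$ and integer $n\ge0$ let $$\mu_{2n}(\tau;\tfrac14)=\int_{-\infty}^{\infty}x^{2n}\exp\left\{-\left(x^6-\tau x^4+\tfrac14\tau^2x^2\right)\right\}dx.$$ Then \begin{align*} \mu_{2n}(\tau;\tfrac14)&=\tfrac13\Gamma\!\left(\tfrac13n+\tfrac16\right){}_2F_2\!\left(\tfrac13-\tfrac13n,\tfrac13+\tfrac23n;\tfrac13,\tfrac23;-\tfrac{\tau^3}{54}\right)+\tfrac13\tau\Gamma\!\left(\tfrac13n+\tfrac56\right){}_2F_2\!\left(\tfrac23-\tfrac13n,\tfrac23+\tfrac23n;\tfrac23,\tfrac43;-\tfrac{\tau^3}{54}\right)\\ &\quad+\frac{n\tau^2}{18}\Gamma\!\left(\tfrac13n+\tfrac12\right){}_2F_2\!\left(1-\tfrac13n,1+\tfrac23n;\tfrac43,\tfrac53;-\tfrac{\tau^3}{54}\right). \end{align*}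
   Context: ${}_2F_2(a_1,a_2;b_1,b_2;z)$ denotes the generalised hypergeometric function with upper parameters $a_1,a_2$ and lower parameters $b_1,b_2$. *)

theory Defs
  imports "HOL-Analysis.Analysis"
begin

definition hyp2F2 :: "real \<Rightarrow> real \<Rightarrow> real \<Rightarrow> real \<Rightarrow> real \<Rightarrow> real" where
  "hyp2F2 a1 a2 b1 b2 z =
     (\<Sum>k. pochhammer a1 k * pochhammer a2 k / (pochhammer b1 k * pochhammer b2 k)
            * z ^ k / fact k)"

definition mu :: "nat \<Rightarrow> real \<Rightarrow> real" where
  "mu n \<tau> = (\<integral>x. x ^ (2*n) * exp (- (x ^ 6 - \<tau> * x ^ 4 + \<tau>\<^sup>2 / 4 * x\<^sup>2)) \<partial>lborel)"

end

theory Submission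
  imports Defs "HOL-Computational_Algebra.Polynomial"
begin

lemma nn_integral_half_SUP:
  fixes f :: "real \<Rightarrow> ennreal" and h :: "nat \<Rightarrow> real"
  assumes [measurable]: "f \<in> borel_measurable borel" and "incseq h" and "filterlim h at_top sequentially"
  shows "(\<integral>\<^sup>+x. f x * indicator {0..} x \<partial>lborel) = (SUP m. \<integral>\<^sup>+x. f x * indicator {0..h m} x \<partial>lborel)"
proof -
  have "(\<integral>\<^sup>+x. (SUP m. f x * indicator {0..h m} x) \<partial>lborel) = (SUP m. \<integral>\<^sup>+x. f x * indicator {0..h m} x \<partial>lborel)"
  proof (rule nn_integral_monotone_convergence_SUP)
    show "incseq (\<lambda>m x. f x * indicator {0..h m} x)"
      using assms(2) by (auto simp: incseq_def le_fun_def split: split_indicator intro: order_trans)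
  qed simp
  moreover have "(SUP m. f x * indicator {0..h m} x) = f x * indicator {0..} x" for x
  proof (cases "x \<ge> 0")
    case True
    from assms(3) have "eventually (\<lambda>m. h m \<ge> x) sequentially" by (simp add: filterlim_at_top)
    then obtain m where "h m \<ge> x" by (auto simp: eventually_sequentially)
    have "f x \<le> (SUP m. f x * indicator {0..h m} x)"
      using \<open>h m \<ge> x\<close> True by (intro SUP_upper2[of m]) auto
    moreover have "(SUP m. f x * indicator {0..h m} x) \<le> f x"
      by (intro SUP_least) (auto split: split_indicator)
    ultimately show ?thesis using True by (auto intro: antisym)
  qed auto
  ultimately show ?thesis by simp
qed

lemma half_moment:
  fixes q :: nat
  shows "(\<integral>\<^sup>+x. ennreal (x ^ (2*q) * exp (-(x^6))) * indicator {0..} x \<partial>lborel) = ennreal (Gamma ((2*q+1)/6) / 6)"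
proof -
  define s :: real where "s = (2*q+1)/6"
  have s: "s > 0" by (simp add: s_def)
  define G where "G = (\<lambda>t::real. t powr (s - 1) / exp t)"
  have [measurable]: "G \<in> borel_measurable borel" unfolding G_def by measurable
  have eq: "(\<integral>\<^sup>+t. ennreal (G t * indicator {0^6..b^6} t) \<partial>lborel) =
        (\<integral>\<^sup>+x. ennreal (6 * (x ^ (2*q) * exp (-(x^6)))) * indicator {0..b} x \<partial>lborel)" if "b \<ge> 0" for b :: real
  proof -
    have "(\<integral>\<^sup>+t. ennreal (G t * indicator {0^6..b^6} t) \<partial>lborel) =
          (\<integral>\<^sup>+x. ennreal (G (x^6) * (6 * x^5) * indicator {0..b} x) \<partial>lborel)"
      by (rule nn_integral_substitution[where g = "\<lambda>x. x ^ 6" and g' = "\<lambda>x. 6 * x^5"])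
         (use that in \<open>auto intro!: derivative_eq_intros continuous_intros simp: set_borel_measurable_def\<close>)
    also have "\<dots> = (\<integral>\<^sup>+x. ennreal (6 * (x ^ (2*q) * exp (-(x^6)))) * indicator {0..b} x \<partial>lborel)"
    proof (intro nn_integral_cong_AE eventually_mono[OF AE_lborel_singleton[of 0]])
      fix x :: real assume "x \<noteq> 0"
      hence x: "x \<noteq> 0" by auto
      show "ennreal (G (x^6) * (6 * x^5) * indicator {0..b} x) = ennreal (6 * (x ^ (2*q) * exp (-(x^6)))) * indicator {0..b} x"
      proof (cases "x \<in> {0..b}")
        case True
        hence xp: "x > 0" using x by auto
        have h6: "(x^6) powr (s - 1) = x powr (6*(s-1))"
          proof -
          have "x ^ 6 = x powr 6" using xp by (simp add: powr_numeral)
          thus ?thesis by (simp add: powr_powr)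
        qed
        have "(x^6) powr (s - 1) * x^5 = x powr (6*(s-1)) * x powr 5"
          using xp by (simp add: h6 powr_realpow)
        also have "\<dots> = x powr (6*(s-1) + 5)" by (simp only: powr_add)
        also have "6*(s-1) + 5 = real (2*q)" by (simp add: s_def field_simps)
        also have "x powr real (2*q) = x ^ (2*q)" using xp by (rule powr_realpow)
        finally have eqG: "G (x^6) * (6 * x^5) = 6 * (x ^ (2*q) * exp (-(x^6)))"
          unfolding G_def by (simp add: exp_minus field_simps)
        show ?thesis using True eqG by (simp only: indicator_simps mult_1_right)
      qed simp
    qed
    finally show ?thesis .
  qed
  have "ennreal (Gamma s) = (\<integral>\<^sup>+t. ennreal (G t) * indicator {0..} t \<partial>lborel)"
    using Gamma_conv_nn_integral_real[OF s] unfolding G_def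
    by (simp, intro nn_integral_cong) (auto split: split_indicator)
  also have "\<dots> = (SUP m. \<integral>\<^sup>+t. ennreal (G t) * indicator {0..(real m)^6} t \<partial>lborel)"
    by (rule nn_integral_half_SUP) (auto simp: incseq_def power_mono intro!: filterlim_pow_at_top filterlim_real_sequentially)
  also have "\<dots> = (SUP m. \<integral>\<^sup>+x. 6 * (ennreal (x ^ (2*q) * exp (-(x^6))) * indicator {0..real m} x) \<partial>lborel)"
  proof (intro SUP_cong refl)
    fix m :: nat
    have "(\<integral>\<^sup>+t. ennreal (G t) * indicator {0..(real m)^6} t \<partial>lborel) = (\<integral>\<^sup>+t. ennreal (G t * indicator {0^6..(real m)^6} t) \<partial>lborel)"
      by (intro nn_integral_cong) (auto split: split_indicator)
    also have "\<dots> = (\<integral>\<^sup>+x. ennreal (6 * (x ^ (2*q) * exp (-(x^6)))) * indicator {0..real m} x \<partial>lborel)"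
      by (rule eq) simp
    also have "\<dots> = (\<integral>\<^sup>+x. 6 * (ennreal (x ^ (2*q) * exp (-(x^6))) * indicator {0..real m} x) \<partial>lborel)"
      by (intro nn_integral_cong) (auto simp: ennreal_mult' split: split_indicator)
    finally show "(\<integral>\<^sup>+t. ennreal (G t) * indicator {0..(real m)^6} t \<partial>lborel) = \<dots>" .
  qed
  also have "\<dots> = (SUP m. 6 * \<integral>\<^sup>+x. ennreal (x ^ (2*q) * exp (-(x^6))) * indicator {0..real m} x \<partial>lborel)"
    by (subst nn_integral_cmult) auto
  also have "\<dots> = 6 * (SUP m. \<integral>\<^sup>+x. ennreal (x ^ (2*q) * exp (-(x^6))) * indicator {0..real m} x \<partial>lborel)"
    by (simp add: SUP_mult_left_ennreal)
  also have "(SUP m. \<integral>\<^sup>+x. ennreal (x ^ (2*q) * exp (-(x^6))) * indicator {0..real m} x \<partial>lborel) =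
       (\<integral>\<^sup>+x. ennreal (x ^ (2*q) * exp (-(x^6))) * indicator {0..} x \<partial>lborel)"
    by (rule nn_integral_half_SUP[symmetric]) (auto simp: incseq_def filterlim_real_sequentially)
  finally have "ennreal (Gamma s) = 6 * (\<integral>\<^sup>+x. ennreal (x ^ (2*q) * exp (-(x^6))) * indicator {0..} x \<partial>lborel)" .
  hence "(\<integral>\<^sup>+x. ennreal (x ^ (2*q) * exp (-(x^6))) * indicator {0..} x \<partial>lborel) = ennreal (Gamma s) / 6"
    by (simp add: ennreal_mult_divide_eq mult.commute[of 6])
  also have "\<dots> = ennreal (Gamma s / 6)" using Gamma_real_pos[OF s] by (subst divide_ennreal[symmetric]) auto
  finally show ?thesis by (simp add: s_def)
qed

definition J :: "nat \<Rightarrow> real" where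
  "J q = (if even q then Gamma ((real q + 1)/6) / 3 else 0)"

lemma even_moment_nn:
  fixes p :: nat
  shows "(\<integral>\<^sup>+x. ennreal (x ^ (2*p) * exp (-(x^6))) \<partial>lborel) = ennreal (Gamma ((2*p+1)/6) / 3)"
proof -
  define f where "f = (\<lambda>x::real. ennreal (x ^ (2*p) * exp (-(x^6))))"
  have [measurable]: "f \<in> borel_measurable borel" unfolding f_def by measurable
  have fm: "f (-x) = f x" for x unfolding f_def by simp
  have "(\<integral>\<^sup>+x. f x \<partial>lborel) = (\<integral>\<^sup>+x. f x * indicator {0..} x + f x * indicator {..<0} x \<partial>lborel)"
    by (intro nn_integral_cong) (auto split: split_indicator)
  also have "\<dots> = (\<integral>\<^sup>+x. f x * indicator {0..} x \<partial>lborel) + (\<integral>\<^sup>+x. f x * indicator {..<0} x \<partial>lborel)"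
    by (rule nn_integral_add) auto
  also have "(\<integral>\<^sup>+x. f x * indicator {..<0} x \<partial>lborel) = (\<integral>\<^sup>+x. f (0 + (-1) * x) * indicator {..<0} (0 + (-1) * x) \<partial>lborel)"
    by (subst nn_integral_real_affine[of _ "-1" 0]) auto
  also have "\<dots> = (\<integral>\<^sup>+x. f x * indicator {0..} x \<partial>lborel)"
    by (intro nn_integral_cong_AE eventually_mono[OF AE_lborel_singleton[of 0]])
       (auto simp: fm split: split_indicator)
  also have "(\<integral>\<^sup>+x. f x * indicator {0..} x \<partial>lborel) = ennreal (Gamma ((2*p+1)/6) / 6)"
    unfolding f_def by (rule half_moment)
  also have "ennreal (Gamma ((2*p+1)/6) / 6) + ennreal (Gamma ((2*p+1)/6) / 6) = ennreal (Gamma ((2*p+1)/6) / 3)"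
    by (subst ennreal_plus[symmetric]) (auto intro!: Gamma_real_pos divide_nonneg_pos less_imp_le)
  finally show ?thesis unfolding f_def .
qed

lemma even_moment:
  fixes p :: nat
  shows "has_bochner_integral lborel (\<lambda>x. x ^ (2*p) * exp (-(x^6))) (Gamma ((2*p+1)/6) / 3)"
  by (rule has_bochner_integral_nn_integral) (auto simp: even_moment_nn intro!: Gamma_real_pos less_imp_le divide_nonneg_pos)

lemma integrable_moment: "integrable lborel (\<lambda>x::real. x ^ q * exp (-(x^6)))"
proof (cases "even q")
  case True
  then obtain p where "q = 2*p" by auto
  thus ?thesis using integrable.intros[OF even_moment[of p]] by simp
next
  case False
  then obtain p where q: "q = 2*p+1" using oddE by blast
  have i: "integrable lborel (\<lambda>x::real. x ^ (2*p) * exp (-(x^6)) + x ^ (2*(p+1)) * exp (-(x^6)))"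
    by (rule Bochner_Integration.integrable_add[OF integrable.intros[OF even_moment[of p]] integrable.intros[OF even_moment[of "p+1"]]])
  show ?thesis
  proof (rule Bochner_Integration.integrable_bound[OF i])
    show "AE x in lborel. norm ((x::real) ^ q * exp (- (x ^ 6))) \<le> norm (x ^ (2*p) * exp (-(x^6)) + x ^ (2*(p+1)) * exp (-(x^6)))"
    proof (intro AE_I2)
      fix x :: real
      have "\<bar>x\<bar> ^ (2*p+1) \<le> x ^ (2*p) + x ^ (2*(p+1))"
      proof (cases "\<bar>x\<bar> \<le> 1")
        case True
        have "\<bar>x\<bar> ^ (2*p+1) = \<bar>x\<bar>^(2*p) * \<bar>x\<bar>" by simp
        also have "\<dots> \<le> \<bar>x\<bar>^(2*p) * 1" using True by (intro mult_left_mono) auto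
        also have "\<bar>x\<bar>^(2*p) = x^(2*p)" by (simp add: power_even_abs)
        finally have "\<bar>x\<bar> ^ (2*p+1) \<le> x^(2*p)" by simp
        moreover have "x^(2*(p+1)) \<ge> 0" by (simp only: power_mult zero_le_power2 zero_le_power)
        ultimately show ?thesis by linarith
      next
        case False
        have ax: "\<bar>x\<bar> \<le> \<bar>x\<bar>^2"
        proof -
          have "\<bar>x\<bar> * 1 \<le> \<bar>x\<bar> * \<bar>x\<bar>" using False by (intro mult_left_mono) auto
          thus ?thesis by (simp add: power2_eq_square)
        qed
        have "\<bar>x\<bar> ^ (2*p+1) = \<bar>x\<bar>^(2*p) * \<bar>x\<bar>" by simp
        also have "\<dots> \<le> \<bar>x\<bar>^(2*p) * \<bar>x\<bar>^2" using ax by (intro mult_left_mono) auto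
        also have "\<dots> = x^(2*(p+1))" by (simp add: power_even_abs power_add[symmetric] algebra_simps)
        finally have "\<bar>x\<bar> ^ (2*p+1) \<le> x^(2*(p+1))" .
        moreover have "x^(2*p) \<ge> 0" by (simp only: power_mult zero_le_power2 zero_le_power)
        ultimately show ?thesis by linarith
      qed
      thus "norm (x ^ q * exp (- (x ^ 6))) \<le> norm (x ^ (2*p) * exp (-(x^6)) + x ^ (2*(p+1)) * exp (-(x^6)))"
        by (simp add: q abs_mult power_abs distrib_right[symmetric] mult_right_mono)
    qed
  qed simp
qed

lemma moment: "has_bochner_integral lborel (\<lambda>x::real. x ^ q * exp (-(x^6))) (J q)"
proof (cases "even q")
  case True
  then obtain p where "q = 2*p" by auto
  thus ?thesis using even_moment[of p] by (simp add: J_def add.commute)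
next
  case False
  have "(\<integral>x. (x::real) ^ q * exp (-(x^6)) \<partial>lborel) = (\<integral>x. (-x) ^ q * exp (-((-x)^6)) \<partial>lborel)"
    using lborel_integral_real_affine[where f="\<lambda>x. x ^ q * exp (-(x^6))" and c="-1" and t=0] by simp
  also have "\<dots> = - (\<integral>x. x ^ q * exp (-(x^6)) \<partial>lborel)"
    using False by (simp add: power_minus_odd)
  finally have "(\<integral>x. (x::real) ^ q * exp (-(x^6)) \<partial>lborel) = 0" by simp
  thus ?thesis using integrable_moment[of q] False by (simp add: has_bochner_integral_iff J_def)
qed

lemma J_rec: "J (q + 6) = (real q + 1) / 6 * J q"
proof (cases "even q")
  case True
  have "Gamma ((real (q+6) + 1)/6) = Gamma ((real q + 1)/6 + 1)" by (simp add: field_simps)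
  also have "\<dots> = (real q + 1)/6 * Gamma ((real q + 1)/6)"
    by (rule Gamma_plus1) (auto dest: nonpos_Ints_nonpos)
  finally show ?thesis using True by (simp add: J_def)
qed (simp add: J_def)

definition Lf :: "real poly \<Rightarrow> real" where
  "Lf p = (\<integral>x. poly p x * exp (-(x^6)) \<partial>lborel)"

lemma integrable_poly: "integrable lborel (\<lambda>x. poly (p :: real poly) x * exp (-(x^6)))"
proof -
  have "integrable lborel (\<lambda>x::real. \<Sum>i\<le>degree p. coeff p i * (x ^ i * exp (-(x^6))))"
    by (intro Bochner_Integration.integrable_sum integrable_mult_right integrable_moment)
  then have "integrable lborel (\<lambda>x::real. (\<Sum>i\<le>degree p. coeff p i * x ^ i) * exp (-(x^6)))"
    by (simp only: sum_distrib_right mult.assoc)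
  then show ?thesis by (simp only: poly_altdef)
qed

lemma Lf_add: "Lf (p + q) = Lf p + Lf q"
  unfolding Lf_def by (simp add: distrib_right integrable_poly)

lemma Lf_diff: "Lf (p - q) = Lf p - Lf q"
  unfolding Lf_def by (simp add: left_diff_distrib integrable_poly)

lemma Lf_smult: "Lf (smult c p) = c * Lf p"
  unfolding Lf_def by (simp add: mult.assoc)

lemma Lf_0[simp]: "Lf 0 = 0"
  by (simp add: Lf_def)

lemma Lf_sum: "Lf (sum f A) = (\<Sum>i\<in>A. Lf (f i))"
  by (induction A rule: infinite_finite_induct) (auto simp: Lf_add)

lemma Lf_monom: "Lf (monom c m) = c * J m"
  unfolding Lf_def using moment[of m]
  by (simp add: poly_monom mult.assoc has_bochner_integral_iff)

lemma pderiv_sum: "pderiv (sum f A) = (\<Sum>i\<in>A. pderiv (f i))"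
  by (induction A rule: infinite_finite_induct) (auto simp: pderiv_add)

lemma Lf_ibp: "Lf (pderiv p) = 6 * Lf (monom 1 5 * p)"
proof -
  have mon: "Lf (pderiv (monom c i)) = 6 * Lf (monom 1 5 * monom c i)" for c i
  proof (cases i)
    case 0
    thus ?thesis by (simp add: pderiv_monom mult_monom Lf_monom J_def)
  next
    case (Suc j)
    have "J (j + 6) = (real j + 1) / 6 * J j" by (rule J_rec)
    thus ?thesis using Suc by (simp add: pderiv_monom mult_monom Lf_monom algebra_simps add.commute[of 5])
  qed
  have "Lf (pderiv p) = Lf (pderiv (\<Sum>i\<le>degree p. monom (coeff p i) i))"
    by (simp add: poly_as_sum_of_monoms)
  also have "\<dots> = (\<Sum>i\<le>degree p. Lf (pderiv (monom (coeff p i) i)))"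
    by (simp add: pderiv_sum Lf_sum)
  also have "\<dots> = (\<Sum>i\<le>degree p. 6 * Lf (monom 1 5 * monom (coeff p i) i))"
    by (simp add: mon)
  also have "\<dots> = 6 * Lf (monom 1 5 * (\<Sum>i\<le>degree p. monom (coeff p i) i))"
    by (simp add: sum_distrib_left Lf_sum)
  also have "\<dots> = 6 * Lf (monom 1 5 * p)" by (simp add: poly_as_sum_of_monoms)
  finally show ?thesis .
qed

fun Q :: "nat \<Rightarrow> real poly" where
  "Q 0 = 1"
| "Q (Suc 0) = [:0,1:]^4"
| "Q (Suc (Suc k)) = [:0,1:]^4 * Q (Suc k) - smult ((real k + 1)/2) ([:0,1:]^2 * Q k)"

lemma pderiv_X: "pderiv [:0,1::real:] = 1"
  by (simp add: pderiv_pCons)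

lemma poly_Q_SS: "poly (Q (Suc (Suc k))) x = x^4 * poly (Q (Suc k)) x - (real k + 1)/2 * (x^2 * poly (Q k) x)"
  by simp

lemma Q_deriv_pt:
  "x * poly (pderiv (Q j)) x = real j * poly (Q j) x + 6 * x^2 * (x^4 * poly (Q j) x - poly (Q (Suc j)) x)"
proof (induction j arbitrary: x rule: Q.induct)
  case 1
  show ?case by simp
next
  case 2
  show ?case by (simp add: pderiv_pCons power4_eq_xxxx algebra_simps)
next
  case (3 k)
  define a where "a = poly (Q k) x"
  define b where "b = poly (Q (Suc k)) x"
  define da where "da = poly (pderiv (Q k)) x"
  define db where "db = poly (pderiv (Q (Suc k))) x"
  have h1: "x * da = real k * a + 6 * x^2 * (x^4 * a - b)"
    using "3.IH"(2)[of x] by (simp add: a_def b_def da_def)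
  have h2: "x * db = real (Suc k) * b + 6 * x^2 * (x^4 * b - (x^4 * b - (real k + 1)/2 * (x^2 * a)))"
    using "3.IH"(1)[of x] by (simp add: a_def b_def da_def db_def)
  have lhs: "x * poly (pderiv (Q (Suc (Suc k)))) x = x * (4 * x^3 * b + x^4 * db - (real k + 1)/2 * (2 * x * a + x^2 * da))"
    by (simp add: a_def b_def da_def db_def pderiv_mult pderiv_diff pderiv_smult pderiv_power pderiv_X algebra_simps)
  have rhs: "real (Suc (Suc k)) * poly (Q (Suc (Suc k))) x + 6 * x^2 * (x^4 * poly (Q (Suc (Suc k))) x - poly (Q (Suc (Suc (Suc k)))) x)
     = real (Suc (Suc k)) * (x^4 * b - (real k + 1)/2 * (x^2 * a)) + 6 * x^2 * (x^4 * (x^4 * b - (real k + 1)/2 * (x^2 * a)) - (x^4 * (x^4 * b - (real k + 1)/2 * (x^2 * a)) - (real (Suc k) + 1)/2 * (x^2 * b)))"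
    by (simp only: poly_Q_SS a_def b_def)
  have e1: "x * (4 * x^3 * b + x^4 * db - (real k + 1)/2 * (2 * x * a + x^2 * da)) =
      4 * x^4 * b + x^4 * (x * db) - (real k + 1)/2 * (2 * x^2 * a + x^2 * (x * da))"
    by (simp add: algebra_simps power2_eq_square power4_eq_xxxx power3_eq_cube)
  show ?case unfolding lhs rhs e1 h1 h2
    by (simp add: field_simps power2_eq_square power4_eq_xxxx)
qed

definition Rc :: "nat \<Rightarrow> nat \<Rightarrow> real poly" where
  "Rc n k = [:0,1:]^(Suc (2*n)) * (smult (1 - real n + real k) (Q k) - smult 3 ([:0,1:]^2 * Q (Suc k)))"

lemma cert_pt:
  "x^(2*n) * (18 * poly (Q (Suc (Suc (Suc k)))) x + ((real k + 1 - real n) * (real k + 1 + 2 * real n)) * poly (Q k) x)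
   = poly (pderiv (Rc n k)) x - 6 * x^5 * poly (Rc n k) x"
proof -
  define a where "a = poly (Q k) x"
  define b where "b = poly (Q (Suc k)) x"
  define da where "da = poly (pderiv (Q k)) x"
  define db where "db = poly (pderiv (Q (Suc k))) x"
  define s where "s = (1 - real n + real k) * a - 3 * x^2 * b"
  have h1: "x * da = real k * a + 6 * x^2 * (x^4 * a - b)"
    using Q_deriv_pt[of x k] by (simp add: a_def b_def da_def)
  have h2: "x * db = real (Suc k) * b + 6 * x^2 * (x^4 * b - (x^4 * b - (real k + 1)/2 * (x^2 * a)))"
    using Q_deriv_pt[of x "Suc k"] by (simp add: a_def b_def da_def db_def)
  have D: "poly (Q (Suc (Suc (Suc k)))) x = x^4 * (x^4 * b - (real k + 1)/2 * (x^2 * a)) - (real k + 2)/2 * (x^2 * b)"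
    by (simp only: poly_Q_SS a_def b_def) (simp add: algebra_simps)
  have R: "poly (Rc n k) x = x^(2*n) * (x * s)"
    by (simp add: Rc_def s_def a_def b_def algebra_simps)
  have pX: "poly [:0,1::real:] x = x" by simp
  have pd2: "pderiv ([:0,1::real:]^2) = smult 2 [:0,1:]"
    using pderiv_power_Suc[of "[:0,1::real:]" 1] by (simp add: pderiv_X numeral_2_eq_2)
  have pdP: "pderiv ([:0,1::real:]^(Suc (2*n))) = smult (of_nat (Suc (2*n))) ([:0,1:]^(2*n))"
    using pderiv_power_Suc[of "[:0,1::real:]" "2*n"] by (simp add: pderiv_X)
  have pRp: "pderiv (Rc n k) = [:0,1:]^(Suc (2*n)) * (smult (1 - real n + real k) (pderiv (Q k)) -
        smult 3 ([:0,1:]^2 * pderiv (Q (Suc k)) + Q (Suc k) * smult 2 [:0,1:])) +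
      (smult (1 - real n + real k) (Q k) - smult 3 ([:0,1:]^2 * Q (Suc k))) * smult (of_nat (Suc (2*n))) ([:0,1:]^(2*n))"
    by (simp only: Rc_def pderiv_mult pderiv_diff pderiv_smult pd2 pdP)
  have pR: "poly (pderiv (Rc n k)) x = x^(2*n) * ((2*real n+1) * s + (1 - real n + real k) * (x*da) - 6*x^2*b - 3*x^2*(x*db))"
    unfolding pRp by (simp only: poly_mult poly_diff poly_add poly_smult poly_power pX)
       (simp add: s_def a_def b_def da_def db_def power2_eq_square algebra_simps)
  have key: "18 * poly (Q (Suc (Suc (Suc k)))) x + ((real k + 1 - real n) * (real k + 1 + 2 * real n)) * a =
       (2*real n+1) * s + (1 - real n + real k) * (x*da) - 6*x^2*b - 3*x^2*(x*db) - 6 * x^6 * s"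
    unfolding D h1 h2 s_def by (simp add: field_simps eval_nat_numeral)
  have "x^(2*n) * (18 * poly (Q (Suc (Suc (Suc k)))) x + ((real k + 1 - real n) * (real k + 1 + 2 * real n)) * a)
      = x^(2*n) * ((2*real n+1) * s + (1 - real n + real k) * (x*da) - 6*x^2*b - 3*x^2*(x*db) - 6 * x^6 * s)"
    by (simp only: key)
  also have "\<dots> = poly (pderiv (Rc n k)) x - 6 * x^5 * poly (Rc n k) x"
    unfolding pR R by (simp add: algebra_simps eval_nat_numeral)
  finally show ?thesis by (simp add: a_def)
qed

lemma Xpow_monom: "[:0,1::real:]^m = monom 1 m"
  by (simp add: monom_altdef)

definition ee :: "nat \<Rightarrow> nat \<Rightarrow> real" where
  "ee n k = Lf ([:0,1:]^(2*n) * Q k)"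

lemma ee_rec: "18 * ee n (Suc (Suc (Suc k))) + ((real k + 1 - real n) * (real k + 1 + 2 * real n)) * ee n k = 0"
proof -
  define c where "c = (real k + 1 - real n) * (real k + 1 + 2 * real n)"
  have "[:0,1:]^(2*n) * (smult 18 (Q (Suc (Suc (Suc k)))) + smult c (Q k)) = pderiv (Rc n k) - smult 6 (monom 1 5 * Rc n k)"
  proof (rule poly_eq_poly_eq_iff[THEN iffD1], rule ext)
    fix x :: real
    show "poly ([:0,1:]^(2*n) * (smult 18 (Q (Suc (Suc (Suc k)))) + smult c (Q k))) x = poly (pderiv (Rc n k) - smult 6 (monom 1 5 * Rc n k)) x"
      using cert_pt[of x n k] by (simp add: c_def poly_monom mult.assoc)
  qed
  hence "Lf ([:0,1:]^(2*n) * (smult 18 (Q (Suc (Suc (Suc k)))) + smult c (Q k))) = 0"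
    by (simp add: Lf_diff Lf_smult Lf_ibp)
  thus ?thesis by (simp add: ee_def c_def distrib_left Lf_add Lf_smult mult_smult_right)
qed

lemma ee_0: "ee n 0 = Gamma ((2 * real n + 1)/6) / 3"
  by (simp add: ee_def Xpow_monom Lf_monom J_def)

lemma ee_1: "ee n 1 = Gamma ((2 * real n + 5)/6) / 3"
proof -
  have "[:0,1::real:]^(2*n) * [:0,1:]^4 = monom 1 (2*n+4)" by (simp add: Xpow_monom mult_monom)
  thus ?thesis by (simp add: ee_def Lf_monom J_def field_simps)
qed

lemma Q2: "Q 2 = monom 1 8 - smult (1/2) (monom (1::real) 2)"
proof -
  have "Q 2 = [:0,1:]^4 * [:0,1:]^4 - smult ((real 0 + 1)/2) ([:0,1:]^2 * 1)"
    by (simp only: numeral_2_eq_2 Q.simps)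
  also have "\<dots> = monom 1 8 - smult (1/2) (monom (1::real) 2)"
    by (simp only: Xpow_monom mult_monom mult_1_right) simp
  finally show ?thesis .
qed

lemma ee_2: "ee n 2 = 2 * (real n * Gamma ((2 * real n + 3)/6) / 18)"
proof -
  have "[:0,1::real:]^(2*n) * Q 2 = monom 1 (2*n+2+6) - smult (1/2) (monom 1 (2*n+2))"
    by (simp only: Q2 Xpow_monom mult_monom right_diff_distrib mult_smult_right) (simp add: add_ac)
  hence "ee n 2 = J (2*n+2+6) - J (2*n+2) / 2"
    by (simp add: ee_def Lf_diff Lf_monom Lf_smult)
  also have "\<dots> = (real (2*n+2) + 1)/6 * J (2*n+2) - J (2*n+2)/2" by (simp only: J_rec)
  also have "\<dots> = real n / 3 * J (2*n+2)" by (simp add: field_simps)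
  also have "\<dots> = 2 * (real n * Gamma ((2 * real n + 3)/6) / 18)" by (simp add: J_def field_simps)
  finally show ?thesis .
qed

definition aT :: "real \<Rightarrow> real \<Rightarrow> nat \<Rightarrow> real" where
  "aT t x i = (t * x^4)^i / fact i"

definition bT :: "real \<Rightarrow> real \<Rightarrow> nat \<Rightarrow> real" where
  "bT t x j = (if even j then (-(t^2 * x^2 / 4))^(j div 2) / fact (j div 2) else 0)"

lemma exp_sums_real: "(\<lambda>i. z^i / fact i) sums exp (z::real)"
  using exp_converges[of z] by (simp add: divide_inverse mult.commute)

lemma aT_sums: "aT t x sums exp (t * x^4)"
  unfolding aT_def by (rule exp_sums_real)

lemma aT_norm_sums: "(\<lambda>i. norm (aT t x i)) sums exp (\<bar>t\<bar> * x^4)"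
proof -
  have "(\<lambda>i. \<bar>t * x^4\<bar>^i / fact i) sums exp (\<bar>t * x^4\<bar>)" by (rule exp_sums_real)
  thus ?thesis by (simp add: aT_def abs_mult power_abs)
qed

lemma even_reindex_sums:
  assumes "(\<lambda>l. f (2*l)) sums c" and "\<And>j. odd j \<Longrightarrow> f j = 0"
  shows "f sums c"
proof -
  have "strict_mono (\<lambda>l::nat. 2*l)" by (auto simp: strict_mono_def)
  moreover have "f j = 0" if "j \<notin> range (\<lambda>l::nat. 2*l)" for j
    using that assms(2) by (metis evenE rangeI)
  ultimately show ?thesis using sums_mono_reindex[of "\<lambda>l. 2*l" f c] assms(1) by simp
qed

lemma bT_sums: "bT t x sums exp (-(t^2 * x^2 / 4))"
  by (rule even_reindex_sums) (auto simp: bT_def intro: exp_sums_real)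

lemma bT_norm_sums: "(\<lambda>j. norm (bT t x j)) sums exp (t^2 * x^2 / 4)"
proof (rule even_reindex_sums)
  have "(\<lambda>l. \<bar>-(t^2 * x^2 / 4)\<bar>^l / fact l) sums exp (\<bar>-(t^2 * x^2 / 4)\<bar>)" by (rule exp_sums_real)
  thus "(\<lambda>l. norm (bT t x (2*l))) sums exp (t^2 * x^2 / 4)" by (simp add: bT_def power_abs)
qed (simp add: bT_def)

lemma aT_scale: "aT t x i = t^i * aT 1 x i"
  by (simp add: aT_def power_mult_distrib)

lemma bT_scale: "bT t x j = t^j * bT 1 x j"
proof (cases "even j")
  case True
  then obtain l where j: "j = 2*l" by auto
  have "(-(t^2 * x^2 / 4))^l = (t^2)^l * (-(x^2/4))^l"
    by (simp add: power_mult_distrib[symmetric])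
  thus ?thesis by (simp add: bT_def j power_mult)
qed (simp add: bT_def)

definition HH :: "real \<Rightarrow> nat \<Rightarrow> real" where
  "HH x k = (\<Sum>i\<le>k. aT 1 x i * bT 1 x (k - i))"

lemma aT_rec: "real (Suc i) * aT 1 x (Suc i) = x^4 * aT 1 x i"
proof -
  have f: "(fact (Suc i)::real) = real (Suc i) * fact i" by simp
  have nz: "real (Suc i) \<noteq> 0" by simp
  have "real (Suc i) * aT 1 x (Suc i) = (real (Suc i) / real (Suc i)) * (x^4 * (x^4)^i / fact i)"
    by (simp only: aT_def f power_Suc mult_1_left) simp
  also have "\<dots> = x^4 * aT 1 x i" using nz by (simp add: aT_def)
  finally show ?thesis .
qed

lemma bT_rec: "real (Suc (Suc j)) * bT 1 x (Suc (Suc j)) = -(x^2/2) * bT 1 x j"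
proof (cases "even j")
  case True
  then obtain l where j: "j = 2*l" by auto
  have "Suc (Suc j) = 2 * Suc l" using j by simp
  hence "bT 1 x (Suc (Suc j)) = (-(x^2/4))^(Suc l) / fact (Suc l)" by (simp add: bT_def del: fact_Suc)
  also have "\<dots> = (-(x^2/4)) * (-(x^2/4))^l / (real (Suc l) * fact l)"
    by (simp only: power_Suc fact_Suc of_nat_mult)
  finally have e: "bT 1 x (Suc (Suc j)) = (-(x^2/4)) * (-(x^2/4))^l / (real (Suc l) * fact l)" .
  have r: "real (Suc (Suc j)) = 2 * real (Suc l)" using j by simp
  have b: "bT 1 x j = (-(x^2/4))^l / fact l" by (simp add: bT_def j)
  have nz: "real (Suc l) \<noteq> 0" by simp
  have "real (Suc (Suc j)) * bT 1 x (Suc (Suc j)) = (real (Suc l) / real (Suc l)) * (2 * (-(x^2/4)) * ((-(x^2/4))^l / fact l))"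
    unfolding e r by (simp only: times_divide_eq_left times_divide_eq_right mult_ac divide_divide_eq_left)
  also have "\<dots> = -(x^2/2) * bT 1 x j" using nz by (simp add: b)
  finally show ?thesis .
qed (simp add: bT_def)

lemma HH_rec: "real (Suc (Suc k)) * HH x (Suc (Suc k)) = x^4 * HH x (Suc k) - x^2/2 * HH x k"
proof -
  let ?A = "aT 1 x" and ?B = "bT 1 x"
  have "real (Suc (Suc k)) * HH x (Suc (Suc k)) =
      (\<Sum>i\<le>Suc (Suc k). real i * (?A i * ?B (Suc (Suc k) - i))) +
      (\<Sum>i\<le>Suc (Suc k). real (Suc (Suc k) - i) * (?A i * ?B (Suc (Suc k) - i)))"
    unfolding HH_def sum_distrib_left sum.distrib[symmetric]
    by (intro sum.cong refl) (simp add: distrib_right[symmetric] of_nat_diff)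
  also have "(\<Sum>i\<le>Suc (Suc k). real i * (?A i * ?B (Suc (Suc k) - i))) =
      (\<Sum>i\<le>Suc k. real (Suc i) * (?A (Suc i) * ?B (Suc k - i)))"
    by (subst sum.atMost_Suc_shift) simp
  also have "\<dots> = x^4 * HH x (Suc k)"
    unfolding HH_def sum_distrib_left
    by (intro sum.cong refl) (simp only: mult.assoc[symmetric] aT_rec)
  also have "(\<Sum>i\<le>Suc (Suc k). real (Suc (Suc k) - i) * (?A i * ?B (Suc (Suc k) - i))) =
      (\<Sum>i\<le>k. real (Suc (Suc k) - i) * (?A i * ?B (Suc (Suc k) - i)))"
    by (simp add: bT_def)
  also have "\<dots> = (\<Sum>i\<le>k. ?A i * (real (Suc (Suc (k - i))) * ?B (Suc (Suc (k - i)))))"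
    by (intro sum.cong refl) (simp add: Suc_diff_le)
  also have "\<dots> = - (x^2/2) * HH x k"
    unfolding HH_def sum_distrib_left by (intro sum.cong refl) (simp only: bT_rec mult_ac)
  finally show ?thesis by simp
qed

lemma HH_Q': "fact k * HH y k = poly (Q k) y"
proof (induction k rule: Q.induct)
  case 1
  show ?case by (simp add: HH_def aT_def bT_def)
next
  case 2
  show ?case by (simp add: HH_def aT_def bT_def)
next
  case (3 k)
  have "fact (Suc (Suc k)) * HH y (Suc (Suc k)) = fact (Suc k) * (real (Suc (Suc k)) * HH y (Suc (Suc k)))"
    by (simp only: fact_Suc[of "Suc k"] of_nat_mult mult_ac)
  also have "\<dots> = y^4 * (fact (Suc k) * HH y (Suc k)) - (real k + 1)/2 * (y^2 * (fact k * HH y k))"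
    by (simp only: HH_rec fact_Suc[of k] of_nat_mult) (simp add: algebra_simps)
  also have "\<dots> = poly (Q (Suc (Suc k))) y"
    by (simp only: "3.IH" poly_Q_SS)
  finally show ?case .
qed

lemma HH_Q: "HH y k = poly (Q k) y / (fact k :: real)"
  using HH_Q'[of k y] by (simp add: field_simps)

lemma cauchy_aT_bT: "(\<Sum>i\<le>k. aT t x i * bT t x (k - i)) = t^k * poly (Q k) x / fact k"
proof -
  have "(\<Sum>i\<le>k. aT t x i * bT t x (k - i)) = (\<Sum>i\<le>k. t^k * (aT 1 x i * bT 1 x (k - i)))"
    by (intro sum.cong refl) (simp add: aT_scale[of t] bT_scale[of t] power_add[symmetric])
  also have "\<dots> = t^k * HH x k" by (simp add: HH_def sum_distrib_left)
  finally show ?thesis by (simp add: HH_Q)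
qed

lemma cubic_bound:
  fixes a b y :: real
  assumes a: "a \<ge> 0" and b: "b \<ge> 0" and y: "y \<ge> 0"
  shows "a * y^2 + b * y - y^3/2 \<le> a * (2*a+2*b+1)^2 + b * (2*a+2*b+1)"
proof (cases "y \<le> 2*a+2*b+1")
  case True
  have "a * y^2 \<le> a * (2*a+2*b+1)^2" using True a y by (intro mult_left_mono power_mono) auto
  moreover have "b * y \<le> b * (2*a+2*b+1)" using True b by (intro mult_left_mono) auto
  moreover have "y^3 \<ge> 0" using y by simp
  ultimately show ?thesis by linarith
next
  case False
  hence y1: "y \<ge> 1" using a b by linarith
  have "y \<le> y^2" using y1 by (simp add: power2_eq_square)
  have "(2*a+2*b+1) * y^2 \<le> y * y^2" using False by (intro mult_right_mono) auto
  hence "(2*a+2*b+1) * y^2 \<le> y^3" by (simp add: power2_eq_square power3_eq_cube)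
  hence h1: "2*(a*y^2) + 2*(b*y^2) + y^2 \<le> y^3" by (simp add: algebra_simps)
  have h2: "b * y \<le> b * y^2" using \<open>y \<le> y^2\<close> b by (intro mult_left_mono)
  have h4: "0 \<le> a * (2*a+2*b+1)^2 + b * (2*a+2*b+1)" using a b by simp
  have h3: "y^2 \<ge> 0" by simp
  show ?thesis using h1 h2 h3 h4 by linarith
qed

lemma integrable_half_moment: "integrable lborel (\<lambda>x::real. x^(2*n) * exp (-(x^6)/2))"
proof -
  define c :: real where "c = root 6 (1/2)"
  have c6: "c^6 = 1/2" unfolding c_def by (rule real_root_pow_pos2) auto
  have cpos: "c > 0" unfolding c_def by simp
  have "integrable lborel (\<lambda>x::real. (0 + c * x)^(2*n) * exp (-((0 + c * x)^6)))"
    by (rule lborel_integrable_real_affine[OF integrable_moment]) (use cpos in simp)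
  hence "integrable lborel (\<lambda>x::real. ((c * x)^(2*n) * exp (-((c * x)^6))) / c^(2*n))"
    by (intro Bochner_Integration.integrable_divide) simp
  also have "(\<lambda>x::real. ((c * x)^(2*n) * exp (-((c * x)^6))) / c^(2*n)) = (\<lambda>x. x^(2*n) * exp (-(x^6)/2))"
    using cpos by (auto simp: power_mult_distrib c6 field_simps)
  finally show ?thesis .
qed

definition Dom :: "nat \<Rightarrow> real \<Rightarrow> real \<Rightarrow> real" where
  "Dom n t x = x^(2*n) * exp (-(x^6)) * (exp (\<bar>t\<bar> * x^4) * exp (t^2 * x^2 / 4))"

lemma integrable_Dom: "integrable lborel (Dom n t)"
proof -
  define C where "C = \<bar>t\<bar> * (2*\<bar>t\<bar>+2*(t^2/4)+1)^2 + (t^2/4) * (2*\<bar>t\<bar>+2*(t^2/4)+1)"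
  have i: "integrable lborel (\<lambda>x::real. exp C * (x^(2*n) * exp (-(x^6)/2)))"
    by (intro integrable_mult_right integrable_half_moment)
  show ?thesis
  proof (rule Bochner_Integration.integrable_bound[OF i])
    show "AE x in lborel. norm (Dom n t x) \<le> norm (exp C * (x^(2*n) * exp (-(x^6)/2)))"
    proof (intro AE_I2)
      fix x :: real
      have cb: "\<bar>t\<bar> * (x^2)^2 + (t^2/4) * x^2 - (x^2)^3/2 \<le> C"
        unfolding C_def by (rule cubic_bound) auto
      have "-(x^6) + \<bar>t\<bar> * x^4 + t^2 * x^2 / 4 \<le> C + (-(x^6)/2)"
        using cb by (simp add: power_mult[symmetric])
      hence "exp (-(x^6)) * (exp (\<bar>t\<bar> * x^4) * exp (t^2 * x^2 / 4)) \<le> exp C * exp (-(x^6)/2)"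
        by (simp add: exp_add[symmetric])
      moreover have "x^(2*n) \<ge> 0" by (simp add: power_mult)
      ultimately have "x^(2*n) * (exp (-(x^6)) * (exp (\<bar>t\<bar> * x^4) * exp (t^2 * x^2 / 4))) \<le> x^(2*n) * (exp C * exp (-(x^6)/2))"
        by (intro mult_left_mono)
      moreover have "x^(2*n) \<ge> 0" by (simp add: power_mult)
      ultimately show "norm (Dom n t x) \<le> norm (exp C * (x^(2*n) * exp (-(x^6)/2)))"
        by (simp add: Dom_def abs_mult mult_ac)
    qed
  qed (unfold Dom_def, measurable)
qed

lemma cauchy_sums:
  "(\<lambda>k. \<Sum>i\<le>k. aT t x i * bT t x (k - i)) sums (exp (t * x^4) * exp (-(t^2 * x^2 / 4)))"
proof -
  have "(\<lambda>k. \<Sum>i\<le>k. aT t x i * bT t x (k - i)) sums ((\<Sum>k. aT t x k) * (\<Sum>k. bT t x k))"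
    by (rule Cauchy_product_sums) (use aT_norm_sums bT_norm_sums in \<open>auto simp: sums_iff\<close>)
  thus ?thesis using aT_sums[of t x] bT_sums[of t x] by (simp add: sums_iff)
qed

lemma cauchy_norm_sums:
  "(\<lambda>k. \<Sum>i\<le>k. norm (aT t x i) * norm (bT t x (k - i))) sums (exp (\<bar>t\<bar> * x^4) * exp (t^2 * x^2 / 4))"
proof -
  have "(\<lambda>k. \<Sum>i\<le>k. norm (aT t x i) * norm (bT t x (k - i))) sums ((\<Sum>k. norm (aT t x k)) * (\<Sum>k. norm (bT t x k)))"
    by (rule Cauchy_product_sums) (use aT_norm_sums bT_norm_sums in \<open>auto simp: sums_iff\<close>)
  thus ?thesis using aT_norm_sums[of t x] bT_norm_sums[of t x] by (simp add: sums_iff)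
qed

definition fk :: "nat \<Rightarrow> real \<Rightarrow> nat \<Rightarrow> real \<Rightarrow> real" where
  "fk n t k x = t^k / fact k * (poly ([:0,1:]^(2*n) * Q k) x * exp (-(x^6)))"

definition gk :: "nat \<Rightarrow> real \<Rightarrow> nat \<Rightarrow> real \<Rightarrow> real" where
  "gk n t k x = x^(2*n) * exp (-(x^6)) * (\<Sum>i\<le>k. norm (aT t x i) * norm (bT t x (k - i)))"

lemma fk_alt: "fk n t k x = x^(2*n) * exp (-(x^6)) * (\<Sum>i\<le>k. aT t x i * bT t x (k - i))"
  by (simp add: fk_def cauchy_aT_bT)

lemma fk_sums: "(\<lambda>k. fk n t k x) sums (x^(2*n) * exp (-(x^6 - t * x^4 + t^2/4 * x^2)))"
proof -
  have "(\<lambda>k. fk n t k x) sums (x^(2*n) * exp (-(x^6)) * (exp (t * x^4) * exp (-(t^2 * x^2 / 4))))"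
    unfolding fk_alt by (intro sums_mult cauchy_sums)
  also have "x^(2*n) * exp (-(x^6)) * (exp (t * x^4) * exp (-(t^2 * x^2 / 4))) = x^(2*n) * exp (-(x^6 - t * x^4 + t^2/4 * x^2))"
    by (simp add: exp_add[symmetric] mult.assoc)
  finally show ?thesis .
qed

lemma gk_sums: "(\<lambda>k. gk n t k x) sums Dom n t x"
  unfolding gk_def Dom_def by (intro sums_mult cauchy_norm_sums)

lemma gk_nonneg: "gk n t k x \<ge> 0"
  unfolding gk_def by (intro mult_nonneg_nonneg sum_nonneg) (auto simp: power_mult)

lemma fk_bound: "norm (fk n t k x) \<le> gk n t k x"
proof -
  have "norm (fk n t k x) = x^(2*n) * exp (-(x^6)) * norm (\<Sum>i\<le>k. aT t x i * bT t x (k - i))"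
    by (simp add: fk_alt abs_mult power_mult)
  also have "\<dots> \<le> x^(2*n) * exp (-(x^6)) * (\<Sum>i\<le>k. norm (aT t x i * bT t x (k - i)))"
    by (intro mult_left_mono norm_sum) (auto simp: power_mult)
  also have "\<dots> = gk n t k x" by (simp add: gk_def abs_mult)
  finally show ?thesis .
qed

lemma integrable_fk: "integrable lborel (fk n t k)"
  unfolding fk_def by (intro integrable_mult_right integrable_poly)

lemma integral_fk: "(\<integral>x. fk n t k x \<partial>lborel) = t^k / fact k * ee n k"
  unfolding fk_def ee_def Lf_def by simp

lemma series_mu:
  shows "(\<lambda>k. t^k / fact k * ee n k) sums mu n t"
    and "summable (\<lambda>k. norm (t^k / fact k * ee n k))"
proof -
  have summ_norm: "summable (\<lambda>k. norm (fk n t k x))" for x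
    by (rule summable_comparison_test[OF _ sums_summable[OF gk_sums[of n t x]]])
       (use fk_bound in auto)
  have bnd: "(\<Sum>k\<le>N. (\<integral>x. norm (fk n t k x) \<partial>lborel)) \<le> (\<integral>x. Dom n t x \<partial>lborel)" for N
  proof -
    have "(\<Sum>k\<le>N. (\<integral>x. norm (fk n t k x) \<partial>lborel)) = (\<integral>x. (\<Sum>k\<le>N. norm (fk n t k x)) \<partial>lborel)"
      by (rule Bochner_Integration.integral_sum[symmetric]) (auto intro: integrable_norm integrable_fk)
    also have "\<dots> \<le> (\<integral>x. Dom n t x \<partial>lborel)"
    proof (rule integral_mono)
      show "integrable lborel (\<lambda>x. \<Sum>k\<le>N. norm (fk n t k x))"
        by (auto intro!: integrable_norm integrable_fk)
      show "integrable lborel (Dom n t)" by (rule integrable_Dom)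
      fix x :: real
      have "(\<Sum>k\<le>N. norm (fk n t k x)) \<le> (\<Sum>k\<le>N. gk n t k x)"
        by (intro sum_mono fk_bound)
      also have "\<dots> \<le> (\<Sum>k. gk n t k x)"
        by (intro sum_le_suminf sums_summable[OF gk_sums]) (auto intro: gk_nonneg)
      also have "\<dots> = Dom n t x" using gk_sums by (simp add: sums_iff)
      finally show "(\<Sum>k\<le>N. norm (fk n t k x)) \<le> Dom n t x" .
    qed
    finally show ?thesis .
  qed
  have summ_int: "summable (\<lambda>k. (\<integral>x. norm (fk n t k x) \<partial>lborel))"
    by (rule bounded_imp_summable[OF _ bnd]) auto
  have "(\<lambda>k. (\<integral>x. fk n t k x \<partial>lborel)) sums (\<integral>x. (\<Sum>k. fk n t k x) \<partial>lborel)"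
    by (rule sums_integral[OF integrable_fk _ summ_int]) (intro AE_I2 summ_norm)
  also have "(\<integral>x. (\<Sum>k. fk n t k x) \<partial>lborel) = mu n t"
    unfolding mu_def by (intro Bochner_Integration.integral_cong refl) (simp add: sums_iff[THEN iffD1, OF fk_sums] sums_unique[OF fk_sums, symmetric])
  finally show "(\<lambda>k. t^k / fact k * ee n k) sums mu n t" by (simp add: integral_fk)
  have "summable (\<lambda>k. norm (\<integral>x. fk n t k x \<partial>lborel))"
    by (rule summable_comparison_test[OF _ summ_int]) (auto intro: integral_norm_bound)
  thus "summable (\<lambda>k. norm (t^k / fact k * ee n k))" by (simp add: integral_fk)
qed

definition uu :: "nat \<Rightarrow> real \<Rightarrow> nat \<Rightarrow> real" where
  "uu n t k = t^k / fact k * ee n k"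

lemma uu_rec:
  "uu n t (k+3) = (-(real k + 1 - real n) * (real k + 1 + 2 * real n) * t^3 / (18 * (real k + 1) * (real k + 2) * (real k + 3))) * uu n t k"
proof -
  have e: "ee n (Suc (Suc (Suc k))) = -((real k + 1 - real n) * (real k + 1 + 2 * real n)) / 18 * ee n k"
    using ee_rec[of n k] by (simp add: field_simps)
  have f: "(fact (k+3) :: real) = (real k + 1) * (real k + 2) * (real k + 3) * fact k"
    by (simp add: fact_Suc numeral_3_eq_3 algebra_simps)
  have nz: "real k + 1 \<noteq> 0" "real k + 2 \<noteq> 0" "real k + 3 \<noteq> 0" "(fact k :: real) \<noteq> 0" by auto
  have "uu n t (k+3) = t^3 * t^k / ((real k + 1) * (real k + 2) * (real k + 3) * fact k) * ee n (Suc (Suc (Suc k)))"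
    unfolding uu_def f by (simp add: power_add numeral_3_eq_3 mult_ac)
  also have "\<dots> = (-(real k + 1 - real n) * (real k + 1 + 2 * real n) * t^3 / (18 * (real k + 1) * (real k + 2) * (real k + 3))) * uu n t k"
    unfolding e uu_def using nz by (simp add: field_simps)
  finally show ?thesis .
qed

definition hT :: "real \<Rightarrow> real \<Rightarrow> real \<Rightarrow> real \<Rightarrow> real \<Rightarrow> nat \<Rightarrow> real" where
  "hT a1 a2 b1 b2 z k = pochhammer a1 k * pochhammer a2 k / (pochhammer b1 k * pochhammer b2 k) * z ^ k / fact k"

lemma hyp2F2_hT: "hyp2F2 a1 a2 b1 b2 z = (\<Sum>k. hT a1 a2 b1 b2 z k)"
  unfolding hyp2F2_def hT_def ..

lemma hT_0: "hT a1 a2 b1 b2 z 0 = 1"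
  by (simp add: hT_def)

lemma hT_Suc:
  assumes "b1 > 0" "b2 > 0"
  shows "hT a1 a2 b1 b2 z (Suc m) = ((a1 + real m) * (a2 + real m) * z / ((b1 + real m) * (b2 + real m) * (real m + 1))) * hT a1 a2 b1 b2 z m"
proof -
  have p: "pochhammer b1 m > 0" "pochhammer b2 m > 0" using assms by (auto intro: pochhammer_pos)
  have q: "b1 + real m > 0" "b2 + real m > 0" "real m + 1 > 0" "(fact m :: real) > 0" using assms by auto
  show ?thesis unfolding hT_def using p q
    by (simp add: pochhammer_Suc field_simps)
qed

lemma closed_form:
  fixes v r :: "nat \<Rightarrow> real"
  assumes "v 0 = K" "\<And>m. v (Suc m) = r m * v m" "\<And>m. h (Suc m) = r m * h m" "h 0 = 1"
  shows "v m = K * h m"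
  by (induction m) (use assms in auto)

lemma suminf_K:
  fixes h :: "nat \<Rightarrow> real"
  assumes "summable (\<lambda>m. K * h m)"
  shows "(\<Sum>m. K * h m) = K * suminf h"
proof (cases "K = 0")
  case False
  with assms have "summable h" by simp
  thus ?thesis by (rule suminf_mult)
qed simp

lemma split3:
  fixes u :: "nat \<Rightarrow> real"
  assumes "summable (\<lambda>k. norm (u k))"
  shows "j < 3 \<Longrightarrow> summable (\<lambda>m. u (3*m+j))"
    and "suminf u = (\<Sum>m. u (3*m)) + (\<Sum>m. u (3*m+1)) + (\<Sum>m. u (3*m+2))"
proof -
  define w where "w j k = (if k mod 3 = j then u k else 0)" for j k
  have sw: "summable (w j)" for j
    by (rule summable_comparison_test[OF _ assms]) (auto simp: w_def)
  have sm: "strict_mono (\<lambda>m::nat. 3*m+j)" for j by (auto simp: strict_mono_def)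
  have re: "(\<lambda>m. w j (3*m+j)) sums suminf (w j)" if "j < 3" for j
  proof -
    have "w j k = 0" if "k \<notin> range (\<lambda>m. 3*m+j)" for k
    proof (rule ccontr)
      assume "w j k \<noteq> 0"
      hence "k mod 3 = j" by (auto simp: w_def split: if_splits)
      hence "k = 3 * (k div 3) + j" by (metis div_mult_mod_eq mult.commute)
      thus False using that by blast
    qed
    thus ?thesis using sums_mono_reindex[OF sm[of j], of "w j" "suminf (w j)"] sw[of j]
      by (simp add: summable_sums)
  qed
  have wj: "w j (3*m+j) = u (3*m+j)" if "j < 3" for j m using that by (simp add: w_def)
  show "j < 3 \<Longrightarrow> summable (\<lambda>m. u (3*m+j))"
    using re[of j] wj[of j] by (simp add: sums_iff)
  have "u = (\<lambda>k. w 0 k + w 1 k + w 2 k)" by (auto simp: w_def fun_eq_iff)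
  hence "suminf u = (\<Sum>k. (w 0 k + w 1 k) + w 2 k)" by simp
  also have "\<dots> = (\<Sum>k. w 0 k + w 1 k) + suminf (w 2)"
    by (rule suminf_add[symmetric]) (auto intro: summable_add sw)
  also have "(\<Sum>k. w 0 k + w 1 k) = suminf (w 0) + suminf (w 1)"
    by (rule suminf_add[symmetric]) (auto intro: sw)
  also have "suminf (w 0) = (\<Sum>m. u (3*m))" using re[of 0] wj[of 0] by (simp add: sums_iff)
  also have "suminf (w 1) = (\<Sum>m. u (3*m+1))" using re[of 1] wj[of 1] by (simp add: sums_iff)
  also have "suminf (w 2) = (\<Sum>m. u (3*m+2))" using re[of 2] wj[of 2] by (simp add: sums_iff)
  finally show "suminf u = (\<Sum>m. u (3*m)) + (\<Sum>m. u (3*m+1)) + (\<Sum>m. u (3*m+2))" .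
qed

lemma ratio_core:
  fixes A B P t :: real
  assumes "P \<noteq> 0"
  shows "(A/3) * (B/3) * (- (t ^ 3) / 54) / (P/27) = -A * B * t^3 / (18 * P)"
  using assms by (simp add: field_simps)

lemma ratio_gen:
  fixes k m n t a1 a2 b1 b2 :: real
  assumes k: "k \<ge> 0" and "a1 + m = (k + 1 - n)/3" "a2 + m = (k + 1 + 2*n)/3"
    and d: "(b1 + m) * (b2 + m) * (m + 1) = (k+1)*(k+2)*(k+3)/27"
  shows "-(k + 1 - n) * (k + 1 + 2 * n) * t^3 / (18 * (k + 1) * (k + 2) * (k + 3))
        = (a1 + m) * (a2 + m) * (- (t ^ 3) / 54) / ((b1 + m) * (b2 + m) * (m + 1))"
proof -
  have P: "(k+1)*(k+2)*(k+3) \<noteq> 0" using k by auto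
  have "(a1 + m) * (a2 + m) * (- (t ^ 3) / 54) / ((b1 + m) * (b2 + m) * (m + 1))
      = ((k + 1 - n)/3) * ((k + 1 + 2*n)/3) * (- (t ^ 3) / 54) / ((k+1)*(k+2)*(k+3)/27)"
    by (simp only: assms)
  also have "\<dots> = -(k + 1 - n) * (k + 1 + 2 * n) * t^3 / (18 * ((k+1)*(k+2)*(k+3)))"
    by (rule ratio_core[OF P])
  finally show ?thesis by (simp add: mult.assoc)
qed

lemma branch:
  fixes u :: "nat \<Rightarrow> real" and n :: nat and t a1 a2 b1 b2 K :: real and j :: nat
  assumes un: "summable (\<lambda>k. norm (u k))" and j: "j < 3"
    and rec: "\<And>k. u (k+3) = (-(real k + 1 - real n) * (real k + 1 + 2 * real n) * t^3 / (18 * (real k + 1) * (real k + 2) * (real k + 3))) * u k"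
    and b: "b1 > 0" "b2 > 0"
    and ratio: "\<And>m. -(real (3*m+j) + 1 - real n) * (real (3*m+j) + 1 + 2 * real n) * t^3 / (18 * (real (3*m+j) + 1) * (real (3*m+j) + 2) * (real (3*m+j) + 3))
        = (a1 + real m) * (a2 + real m) * (- (t ^ 3) / 54) / ((b1 + real m) * (b2 + real m) * (real m + 1))"
    and u0: "u j = K"
  shows "(\<Sum>m. u (3*m+j)) = K * hyp2F2 a1 a2 b1 b2 (- (t ^ 3) / 54)"
proof -
  have cf: "u (3*m+j) = K * hT a1 a2 b1 b2 (- (t ^ 3) / 54) m" for m
  proof (rule closed_form[where v = "\<lambda>m. u (3*m+j)" and h = "hT a1 a2 b1 b2 (- (t ^ 3) / 54)"])
    show "u (3*0+j) = K" using u0 by simp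
    show "hT a1 a2 b1 b2 (- (t ^ 3) / 54) 0 = 1" by (rule hT_0)
    fix m
    show "u (3 * Suc m + j) = (-(real (3*m+j) + 1 - real n) * (real (3*m+j) + 1 + 2 * real n) * t^3 / (18 * (real (3*m+j) + 1) * (real (3*m+j) + 2) * (real (3*m+j) + 3))) * u (3*m+j)"
      using rec[of "3*m+j"] by (simp add: algebra_simps)
    show "hT a1 a2 b1 b2 (- (t ^ 3) / 54) (Suc m) = (-(real (3*m+j) + 1 - real n) * (real (3*m+j) + 1 + 2 * real n) * t^3 / (18 * (real (3*m+j) + 1) * (real (3*m+j) + 2) * (real (3*m+j) + 3))) * hT a1 a2 b1 b2 (- (t ^ 3) / 54) m"
      unfolding ratio by (rule hT_Suc[OF b])
  qed
  have "(\<Sum>m. u (3*m+j)) = (\<Sum>m. K * hT a1 a2 b1 b2 (- (t ^ 3) / 54) m)" by (simp add: cf)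
  also have "\<dots> = K * (\<Sum>m. hT a1 a2 b1 b2 (- (t ^ 3) / 54) m)"
    by (rule suminf_K) (use split3(1)[OF un j] cf in simp)
  finally show ?thesis by (simp add: hyp2F2_hT)
qed

theorem lemma6p5:
  fixes \<tau> :: real and n :: nat
  shows "mu n \<tau> =
      1/3 * Gamma (real n / 3 + 1/6)
        * hyp2F2 (1/3 - real n / 3) (1/3 + 2 * real n / 3) (1/3) (2/3) (- (\<tau> ^ 3) / 54)
    + 1/3 * \<tau> * Gamma (real n / 3 + 5/6)
        * hyp2F2 (2/3 - real n / 3) (2/3 + 2 * real n / 3) (2/3) (4/3) (- (\<tau> ^ 3) / 54)
    + real n * \<tau>\<^sup>2 / 18 * Gamma (real n / 3 + 1/2)
        * hyp2F2 (1 - real n / 3) (1 + 2 * real n / 3) (4/3) (5/3) (- (\<tau> ^ 3) / 54)"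
proof -
  define u where "u = uu n \<tau>"
  have ueq: "u = (\<lambda>k. \<tau>^k / fact k * ee n k)" by (simp add: u_def uu_def fun_eq_iff)
  have us: "u sums mu n \<tau>" and un: "summable (\<lambda>k. norm (u k))"
    unfolding ueq by (rule series_mu)+
  have rec: "\<And>k. u (k+3) = (-(real k + 1 - real n) * (real k + 1 + 2 * real n) * \<tau>^3 / (18 * (real k + 1) * (real k + 2) * (real k + 3))) * u k"
    unfolding u_def by (rule uu_rec)
  have "mu n \<tau> = suminf u" using us by (simp add: sums_iff)
  also have "\<dots> = (\<Sum>m. u (3*m+0)) + (\<Sum>m. u (3*m+1)) + (\<Sum>m. u (3*m+2))"
    using split3(2)[OF un] by simp
  also have "(\<Sum>m. u (3*m+0)) = 1/3 * Gamma (real n / 3 + 1/6)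
        * hyp2F2 (1/3 - real n / 3) (1/3 + 2 * real n / 3) (1/3) (2/3) (- (\<tau> ^ 3) / 54)"
  proof (rule branch[OF un _ rec])
    fix m :: nat
    show "-(real (3*m+0) + 1 - real n) * (real (3*m+0) + 1 + 2 * real n) * \<tau>^3 / (18 * (real (3*m+0) + 1) * (real (3*m+0) + 2) * (real (3*m+0) + 3))
        = (1/3 - real n / 3 + real m) * (1/3 + 2 * real n / 3 + real m) * (- (\<tau> ^ 3) / 54) / ((1/3 + real m) * (2/3 + real m) * (real m + 1))"
      by (rule ratio_gen) (simp_all add: field_simps)
  next
    have g: "Gamma ((2 * real n + 1) / 6) = Gamma (real n / 3 + 1/6)" by (rule arg_cong[where f=Gamma]) simp
    show "u 0 = 1/3 * Gamma (real n / 3 + 1/6)" by (simp add: u_def uu_def ee_0 g)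
  qed auto
  also have "(\<Sum>m. u (3*m+1)) = 1/3 * \<tau> * Gamma (real n / 3 + 5/6)
        * hyp2F2 (2/3 - real n / 3) (2/3 + 2 * real n / 3) (2/3) (4/3) (- (\<tau> ^ 3) / 54)"
  proof (rule branch[OF un _ rec])
    fix m :: nat
    show "-(real (3*m+1) + 1 - real n) * (real (3*m+1) + 1 + 2 * real n) * \<tau>^3 / (18 * (real (3*m+1) + 1) * (real (3*m+1) + 2) * (real (3*m+1) + 3))
        = (2/3 - real n / 3 + real m) * (2/3 + 2 * real n / 3 + real m) * (- (\<tau> ^ 3) / 54) / ((2/3 + real m) * (4/3 + real m) * (real m + 1))"
      by (rule ratio_gen) (simp_all add: field_simps)
  next
    have g: "Gamma ((2 * real n + 5) / 6) = Gamma (real n / 3 + 5/6)" by (rule arg_cong[where f=Gamma]) simp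
    show "u 1 = 1/3 * \<tau> * Gamma (real n / 3 + 5/6)" by (simp add: u_def uu_def ee_1[unfolded One_nat_def] g)
  qed auto
  also have "(\<Sum>m. u (3*m+2)) = real n * \<tau>\<^sup>2 / 18 * Gamma (real n / 3 + 1/2)
        * hyp2F2 (1 - real n / 3) (1 + 2 * real n / 3) (4/3) (5/3) (- (\<tau> ^ 3) / 54)"
  proof (rule branch[OF un _ rec])
    fix m :: nat
    show "-(real (3*m+2) + 1 - real n) * (real (3*m+2) + 1 + 2 * real n) * \<tau>^3 / (18 * (real (3*m+2) + 1) * (real (3*m+2) + 2) * (real (3*m+2) + 3))
        = (1 - real n / 3 + real m) * (1 + 2 * real n / 3 + real m) * (- (\<tau> ^ 3) / 54) / ((4/3 + real m) * (5/3 + real m) * (real m + 1))"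
      by (rule ratio_gen) (simp_all add: field_simps)
  next
    have g: "Gamma ((2 * real n + 3) / 6) = Gamma (real n / 3 + 1/2)" by (rule arg_cong[where f=Gamma]) simp
    show "u 2 = real n * \<tau>\<^sup>2 / 18 * Gamma (real n / 3 + 1/2)" by (simp add: u_def uu_def ee_2 g)
  qed auto
  finally show ?thesis .
qed

end
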